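(* For every hereditary class property $\Pi$, we have $(\Pi^+)^+=\Pi^+$ and $(\Pi^\ast)^+=\Pi^\ast$.
   Context: Graphs are finite and simple. A hereditary class is a class closed under isomorphism and induced subgraphs; a hereditary class property is a set $\Pi$ of hereditary classes such that $\mathscr C\in\Pi$, $\mathscr D$ hereditary, $\mathscr D\subseteq\mathscr C$ imply $\mathscr D\in\Pi$. For non-decreasing $f:\mathbb N\to\mathbb N$ and positive integer $p$, $\mathscr C$ has an $f$-bounded $\Pi$-decomposition with parameter $p$ if there is $\mathscr D_p\in\Pi$ such that every $G\in\mathscr C$ has a partition $V_1,\dots,V_N$ of $V(G)$ with $N\le f(|G|)$ and $G[V_{i_1}\cup\dots\cup V_{i_p}]\in\mathscr D_p$ for all $i_1,\dots,i_p\in[N]$. $\Pi^+$ (resp. $\Pi^\ast$) is the set of hereditary classes that, for every positive integer $p$, have an $f$-bounded $\Pi$-decomposition with parameter $p$ for some constant function $f$ (resp. some non-decreasing $f$ with $f(n)=n^{o(1)}$). *)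

theory Defs
  imports Complex_Main
begin

text \<open>Finite simple graphs, represented with vertices drawn from nat
  (every finite graph is isomorphic to such a graph). A graph is a pair
  (V, E) of a vertex set and a set of 2-element edges.\<close>

type_synonym graph = "nat set \<times> nat set set"

definition verts :: "graph \<Rightarrow> nat set" where "verts G = fst G"
definition edges :: "graph \<Rightarrow> nat set set" where "edges G = snd G"

definition wf_graph :: "graph \<Rightarrow> bool" where
  "wf_graph G \<longleftrightarrow> finite (verts G) \<and>
     (\<forall>e\<in>edges G. \<exists>u v. u \<in> verts G \<and> v \<in> verts G \<and> u \<noteq> v \<and> e = {u, v})"

definition induced :: "graph \<Rightarrow> nat set \<Rightarrow> graph" where
  "induced G S = (verts G \<inter> S, {e \<in> edges G. e \<subseteq> S})"

definition graph_iso :: "graph \<Rightarrow> graph \<Rightarrow> bool" where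
  "graph_iso G H \<longleftrightarrow> (\<exists>f. bij_betw f (verts G) (verts H) \<and>
     (\<forall>u\<in>verts G. \<forall>v\<in>verts G. {u, v} \<in> edges G \<longleftrightarrow> {f u, f v} \<in> edges H))"

definition hereditary :: "graph set \<Rightarrow> bool" where
  "hereditary C \<longleftrightarrow> (\<forall>G\<in>C. wf_graph G) \<and>
     (\<forall>G\<in>C. \<forall>H. wf_graph H \<and> graph_iso G H \<longrightarrow> H \<in> C) \<and>
     (\<forall>G\<in>C. \<forall>S. induced G S \<in> C)"

definition hereditary_class_property :: "graph set set \<Rightarrow> bool" where
  "hereditary_class_property P \<longleftrightarrow> (\<forall>C\<in>P. hereditary C) \<and>
     (\<forall>C\<in>P. \<forall>D. hereditary D \<and> D \<subseteq> C \<longrightarrow> D \<in> P)"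

text \<open>C has an f-bounded P-decomposition with parameter p: partition into
  parts V 0, ..., V (N-1) (possibly empty), N <= f |G|, and the union of any p
  parts (repetitions allowed) induces a graph in a fixed class D_p in P.\<close>
definition has_decomp :: "graph set set \<Rightarrow> graph set \<Rightarrow> (nat \<Rightarrow> nat) \<Rightarrow> nat \<Rightarrow> bool" where
  "has_decomp P C f p \<longleftrightarrow> (\<exists>D\<in>P. \<forall>G\<in>C. \<exists>N Vp.
      N \<le> f (card (verts G)) \<and>
      (\<Union>i<N. Vp i) = verts G \<and>
      (\<forall>i<N. \<forall>j<N. i \<noteq> j \<longrightarrow> Vp i \<inter> Vp j = {}) \<and>
      (\<forall>idx. (\<forall>k<p. idx k < N) \<longrightarrow> induced G (\<Union>k<p. Vp (idx k)) \<in> D))"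

definition plus_prop :: "graph set set \<Rightarrow> graph set set" where
  "plus_prop P = {C. hereditary C \<and>
     (\<forall>p::nat. p \<ge> 1 \<longrightarrow> (\<exists>c::nat. has_decomp P C (\<lambda>_. c) p))}"

definition subpoly :: "(nat \<Rightarrow> nat) \<Rightarrow> bool" where
  "subpoly f \<longleftrightarrow> (\<forall>\<epsilon>::real. \<epsilon> > 0 \<longrightarrow>
     (\<forall>\<^sub>F n in sequentially. real (f n) \<le> real n powr \<epsilon>))"

definition star_prop :: "graph set set \<Rightarrow> graph set set" where
  "star_prop P = {C. hereditary C \<and>
     (\<forall>p::nat. p \<ge> 1 \<longrightarrow> (\<exists>f. mono f \<and> subpoly f \<and> has_decomp P C f p))}"

end

theory Submission
  imports Defs "HOL-Library.FuncSet"
begin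

lemma induced_induced: "induced (induced G X) Y = induced G (X \<inter> Y)"
proof -
  have "{e \<in> {e \<in> edges G. e \<subseteq> X}. e \<subseteq> Y} = {e \<in> edges G. e \<subseteq> X \<inter> Y}" by blast
  thus ?thesis unfolding induced_def verts_def edges_def by (simp add: Int_assoc)
qed

lemma verts_induced: "verts (induced G X) = verts G \<inter> X"
  by (simp add: induced_def verts_def)

lemma induced_self:
  assumes "wf_graph G" shows "induced G (verts G) = G"
proof -
  have "\<forall>e\<in>edges G. e \<subseteq> verts G" using assms unfolding wf_graph_def by fastforce
  hence "{e \<in> edges G. e \<subseteq> verts G} = edges G" by blast
  thus ?thesis by (simp add: induced_def verts_def edges_def)
qed

lemma hered_wf: "hereditary C \<Longrightarrow> G \<in> C \<Longrightarrow> wf_graph G"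
  by (simp add: hereditary_def)

lemma hered_ind: "hereditary C \<Longrightarrow> G \<in> C \<Longrightarrow> induced G S \<in> C"
  by (simp add: hereditary_def)

lemma self_decomp:
  assumes "hereditary C" "C \<in> Q" "p \<ge> 1"
  shows "has_decomp Q C (\<lambda>_. 1) p"
  unfolding has_decomp_def
proof (intro bexI[of _ C] ballI)
  fix G assume G: "G \<in> C"
  have wf: "wf_graph G" using hered_wf assms(1) G .
  show "\<exists>(N::nat) Vp. N \<le> 1 \<and> (\<Union>i<N. Vp i) = verts G \<and>
      (\<forall>i<N. \<forall>j<N. i \<noteq> j \<longrightarrow> Vp i \<inter> Vp j = {}) \<and>
      (\<forall>idx. (\<forall>k<p. idx k < N) \<longrightarrow> induced G (\<Union>k<p. Vp (idx k)) \<in> C)"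
  proof (intro exI[of _ 1] exI[of _ "\<lambda>_. verts G"] conjI allI impI)
    fix idx :: "nat \<Rightarrow> nat"
    have "(\<Union>k<p. verts G) = verts G" using assms(3) by (auto simp: lessThan_empty_iff)
    thus "induced G (\<Union>k<p. verts G) \<in> C" using induced_self[OF wf] G by simp
  qed (auto simp: lessThan_empty_iff)
qed (fact assms(2))

lemma refine:
  fixes G :: graph and Vp :: "nat \<Rightarrow> nat set" and N p M :: nat and D' :: "graph set"
  assumes cov: "(\<Union>i<N. Vp i) = verts G"
    and disj: "\<forall>i<N. \<forall>j<N. i \<noteq> j \<longrightarrow> Vp i \<inter> Vp j = {}"
    and hered: "\<forall>H\<in>D'. \<forall>X. induced H X \<in> D'"
    and dec: "\<forall>idx. (\<forall>k<p. idx k < N) \<longrightarrow> (\<exists>N' U. N' \<le> M \<and>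
        (\<Union>i<N'. U i) = verts (induced G (\<Union>k<p. Vp (idx k))) \<and>
        (\<forall>i<N'. \<forall>j<N'. i \<noteq> j \<longrightarrow> U i \<inter> U j = {}) \<and>
        (\<forall>idx'. (\<forall>k<p. idx' k < N') \<longrightarrow>
            induced (induced G (\<Union>k<p. Vp (idx k))) (\<Union>k<p. U (idx' k)) \<in> D'))"
  shows "\<exists>N' Vp'. N' \<le> N * (M+1)^(N^p) \<and> (\<Union>i<N'. Vp' i) = verts G \<and>
      (\<forall>i<N'. \<forall>j<N'. i \<noteq> j \<longrightarrow> Vp' i \<inter> Vp' j = {}) \<and>
      (\<forall>idx. (\<forall>k<p. idx k < N') \<longrightarrow> induced G (\<Union>k<p. Vp' (idx k)) \<in> D')"
proof -
  define part where "part v = (LEAST i. v \<in> Vp i)" for v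
  have part: "part v < N \<and> v \<in> Vp (part v)" if "v \<in> verts G" for v
  proof -
    have "v \<in> (\<Union>i<N. Vp i)" using that cov by simp
    then obtain i where i: "i < N" "v \<in> Vp i" by blast
    have "v \<in> Vp (part v)" unfolding part_def by (rule LeastI[of _ i]) (fact i(2))
    moreover have "part v \<le> i" unfolding part_def by (rule Least_le) (fact i(2))
    ultimately show ?thesis using i by simp
  qed
  have Vsub: "Vp i \<subseteq> verts G" if "i < N" for i
  proof -
    have "Vp i \<subseteq> (\<Union>i<N. Vp i)" using that by blast
    thus ?thesis using cov by simp
  qed
  define VS where "VS S = (\<Union>k<p. Vp (S k))" for S :: "nat \<Rightarrow> nat"
  have VSsub: "VS S \<subseteq> verts G" if "\<forall>k<p. S k < N" for S
    using Vsub that unfolding VS_def by blast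
  have "\<forall>S. \<exists>MU. (\<forall>k<p. S k < N) \<longrightarrow> (fst MU \<le> M \<and>
        (\<Union>i<fst MU. snd MU i) = VS S \<and>
        (\<forall>idx'. (\<forall>k<p. idx' k < fst MU) \<longrightarrow>
            induced (induced G (VS S)) (\<Union>k<p. snd MU (idx' k)) \<in> D'))"
  proof
    fix S :: "nat \<Rightarrow> nat"
    show "\<exists>MU. (\<forall>k<p. S k < N) \<longrightarrow> (fst MU \<le> M \<and>
        (\<Union>i<fst MU. snd MU i) = VS S \<and>
        (\<forall>idx'. (\<forall>k<p. idx' k < fst MU) \<longrightarrow>
            induced (induced G (VS S)) (\<Union>k<p. snd MU (idx' k)) \<in> D'))"
    proof (cases "\<forall>k<p. S k < N")
      case True
      obtain N' U where A: "N' \<le> M \<and> (\<Union>i<N'. U i) = verts (induced G (\<Union>k<p. Vp (S k))) \<and>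
        (\<forall>i<N'. \<forall>j<N'. i \<noteq> j \<longrightarrow> U i \<inter> U j = {}) \<and>
        (\<forall>idx'. (\<forall>k<p. idx' k < N') \<longrightarrow> induced (induced G (\<Union>k<p. Vp (S k))) (\<Union>k<p. U (idx' k)) \<in> D')"
        using mp[OF spec[OF dec, of S] True] by (elim exE) (erule that)
      note A1 = conjunct1[OF A]
      note A2 = conjunct1[OF conjunct2[OF A], folded VS_def]
      note A3 = conjunct2[OF conjunct2[OF conjunct2[OF A]], folded VS_def]
      have A4: "verts (induced G (VS S)) = VS S" using VSsub[OF True] by (simp add: verts_induced Int_absorb1)
      show ?thesis
        apply (rule exI[of _ "(N', U)"])
        using A1 A2 A3 A4 by simp
    qed blast
  qed
  from choice[OF this] obtain MU where MU0: "\<forall>S. (\<forall>k<p. S k < N) \<longrightarrow> (fst (MU S) \<le> M \<and>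
        (\<Union>i<fst (MU S). snd (MU S) i) = VS S \<and>
        (\<forall>idx'. (\<forall>k<p. idx' k < fst (MU S)) \<longrightarrow>
            induced (induced G (VS S)) (\<Union>k<p. snd (MU S) (idx' k)) \<in> D'))"
    ..
  note MU = MU0[THEN spec, THEN mp]
  define MM where "MM S = fst (MU S)" for S
  define UU where "UU S = snd (MU S)" for S
  define jS where "jS S v = (LEAST j. v \<in> UU S j)" for S v
  have jS: "jS S v < MM S \<and> v \<in> UU S (jS S v)" if Sv: "\<forall>k<p. S k < N" and vS: "v \<in> VS S" for S v
  proof -
    obtain j where j: "j < MM S" "v \<in> UU S j" using MU[OF Sv] vS
      unfolding MM_def UU_def by blast
    have "v \<in> UU S (jS S v)" unfolding jS_def by (rule LeastI[of _ j]) (fact j(2))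
    moreover have "jS S v \<le> j" unfolding jS_def by (rule Least_le) (fact j(2))
    ultimately show ?thesis using j by simp
  qed
  define T where "T = {0..<p} \<rightarrow>\<^sub>E {0..<N}"
  define lab where "lab v = (part v, restrict (\<lambda>S. if v \<in> VS S then jS S v else 0) T)" for v
  define B where "B = {..<N} \<times> (T \<rightarrow>\<^sub>E {..M})"
  have Tvalid: "\<forall>k<p. S k < N" if "S \<in> T" for S using that unfolding T_def by auto
  have labB: "lab v \<in> B" if "v \<in> verts G" for v
  proof -
    have "(if v \<in> VS S then jS S v else 0) \<in> {..M}" if "S \<in> T" for S
    proof -
      have "MM S \<le> M" using MU[OF Tvalid[OF that]] unfolding MM_def by blast
      thus ?thesis using jS[OF Tvalid[OF that], of v] by (cases "v \<in> VS S") auto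
    qed
    thus ?thesis using part[OF that] unfolding lab_def B_def by auto
  qed
  have finT: "finite T" unfolding T_def by (rule finite_PiE) auto
  have cardT: "card T = N^p" unfolding T_def by (simp add: card_PiE)
  have finB: "finite B" unfolding B_def using finT by (auto intro!: finite_PiE)
  have cardB: "card B = N * (M+1)^(N^p)"
    unfolding B_def using finT by (simp add: card_cartesian_product card_PiE cardT)
  define L where "L = lab ` verts G"
  have LB: "L \<subseteq> B" using labB unfolding L_def by blast
  have finL: "finite L" using finB LB finite_subset by blast
  have cardL: "card L \<le> N * (M+1)^(N^p)" using card_mono[OF finB LB] cardB by simp
  obtain h where h: "bij_betw h {0..<card L} L" using ex_bij_betw_nat_finite[OF finL] by blast
  define Vp' where "Vp' i = {v \<in> verts G. lab v = h i}" for i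
  show ?thesis
  proof (intro exI[of _ "card L"] exI[of _ Vp'] conjI allI impI cardL)
    show "(\<Union>i<card L. Vp' i) = verts G"
    proof
      show "(\<Union>i<card L. Vp' i) \<subseteq> verts G" unfolding Vp'_def by blast
      show "verts G \<subseteq> (\<Union>i<card L. Vp' i)"
      proof
        fix v assume v: "v \<in> verts G"
        hence "lab v \<in> h ` {0..<card L}" using h unfolding L_def bij_betw_def by auto
        then obtain i where "i < card L" "lab v = h i" by auto
        thus "v \<in> (\<Union>i<card L. Vp' i)" using v unfolding Vp'_def by blast
      qed
    qed
  next
    fix i j assume "i < card L" "j < card L" "i \<noteq> j"
    hence "h i \<noteq> h j" using h unfolding bij_betw_def inj_on_def by auto
    thus "Vp' i \<inter> Vp' j = {}" unfolding Vp'_def by auto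
  next
    fix idx assume idx: "\<forall>k<p. idx k < card L"
    have "\<forall>k. \<exists>v. k < p \<longrightarrow> v \<in> verts G \<and> lab v = h (idx k)"
    proof
      fix k show "\<exists>v. k < p \<longrightarrow> v \<in> verts G \<and> lab v = h (idx k)"
      proof (cases "k < p")
        case True
        hence "h (idx k) \<in> L" using idx h unfolding bij_betw_def by auto
        thus ?thesis unfolding L_def by auto
      qed simp
    qed
    from choice[OF this] obtain vv where vv0: "\<forall>k. k < p \<longrightarrow> vv k \<in> verts G \<and> lab (vv k) = h (idx k)" ..
    note vv = vv0[THEN spec, THEN mp]
    define S where "S = restrict (\<lambda>k. part (vv k)) {0..<p}"
    have ST: "S \<in> T" unfolding S_def T_def using part vv by auto
    have Sv: "\<forall>k<p. S k < N" using Tvalid[OF ST] .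
    have vvS: "vv k \<in> VS S" if "k < p" for k
      using part[of "vv k"] vv[OF that] that unfolding VS_def S_def by auto
    define idx' where "idx' k = jS S (vv k)" for k
    have idx': "\<forall>k<p. idx' k < fst (MU S)" using jS[OF Sv] vvS unfolding idx'_def MM_def by blast
    define W where "W = (\<Union>k<p. UU S (idx' k))"
    have inD: "induced (induced G (VS S)) W \<in> D'"
      using MU[OF Sv] idx' unfolding W_def UU_def by blast
    define A where "A = (\<Union>k<p. Vp' (idx k))"
    have AW: "A \<subseteq> VS S \<inter> W"
    proof
      fix w assume "w \<in> A"
      then obtain k where k: "k < p" "w \<in> Vp' (idx k)" unfolding A_def by blast
      hence w: "w \<in> verts G" "lab w = lab (vv k)" using vv[OF k(1)] unfolding Vp'_def by auto
      hence "part w = part (vv k)" unfolding lab_def by simp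
      hence "part w = S k" using k(1) unfolding S_def by simp
      hence wS: "w \<in> VS S" using part[OF w(1)] k(1) unfolding VS_def by auto
      have "restrict (\<lambda>S. if w \<in> VS S then jS S w else 0) T S
            = restrict (\<lambda>S. if vv k \<in> VS S then jS S (vv k) else 0) T S"
        using w(2) unfolding lab_def by simp
      hence "jS S w = idx' k" using ST wS vvS[OF k(1)] unfolding idx'_def by simp
      hence "w \<in> UU S (idx' k)" using jS[OF Sv wS] by simp
      thus "w \<in> VS S \<inter> W" using wS k(1) unfolding W_def by blast
    qed
    have "induced (induced (induced G (VS S)) W) A = induced G A"
      using AW by (simp add: induced_induced Int_absorb1 Int_assoc)
    moreover have "induced (induced (induced G (VS S)) W) A \<in> D'" using hered inD by blast
    ultimately show "induced G (\<Union>k<p. Vp' (idx k)) \<in> D'" unfolding A_def by simp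
  qed
qed


lemma bound_mono:
  fixes N c M M' p :: nat
  assumes "N \<le> c" "M \<le> M'"
  shows "N * (M+1)^(N^p) \<le> c * (M'+1)^(c^p)"
proof -
  have "(M+1)^(N^p) \<le> (M'+1)^(N^p)" using assms(2) by (simp add: power_mono)
  also have "\<dots> \<le> (M'+1)^(c^p)"
    by (rule power_increasing) (simp_all add: power_mono assms(1))
  finally show ?thesis using assms(1) by (simp add: mult_le_mono)
qed

lemma compose:
  fixes C D D' :: "graph set" and c p :: nat and f Mf :: "nat \<Rightarrow> nat"
  assumes hD': "hereditary D'"
   and decC: "\<forall>G\<in>C. \<exists>N Vp. N \<le> c \<and> (\<Union>i<N. Vp i) = verts G \<and>
      (\<forall>i<N. \<forall>j<N. i \<noteq> j \<longrightarrow> Vp i \<inter> Vp j = {}) \<and>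
      (\<forall>idx. (\<forall>k<p. idx k < N) \<longrightarrow> induced G (\<Union>k<p. Vp (idx k)) \<in> D)"
   and decD: "\<forall>H\<in>D. \<exists>N Vp. N \<le> f (card (verts H)) \<and> (\<Union>i<N. Vp i) = verts H \<and>
      (\<forall>i<N. \<forall>j<N. i \<noteq> j \<longrightarrow> Vp i \<inter> Vp j = {}) \<and>
      (\<forall>idx. (\<forall>k<p. idx k < N) \<longrightarrow> induced H (\<Union>k<p. Vp (idx k)) \<in> D')"
   and bound: "\<And>G X. G \<in> C \<Longrightarrow> f (card (verts (induced G X))) \<le> Mf (card (verts G))"
  shows "\<forall>G\<in>C. \<exists>N Vp. N \<le> c * (Mf (card (verts G)) + 1)^(c^p) \<and> (\<Union>i<N. Vp i) = verts G \<and>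
      (\<forall>i<N. \<forall>j<N. i \<noteq> j \<longrightarrow> Vp i \<inter> Vp j = {}) \<and>
      (\<forall>idx. (\<forall>k<p. idx k < N) \<longrightarrow> induced G (\<Union>k<p. Vp (idx k)) \<in> D')"
proof
  fix G assume G: "G \<in> C"
  have hered: "\<forall>H\<in>D'. \<forall>X. induced H X \<in> D'" using hD' by (simp add: hereditary_def)
  obtain N Vp where A: "N \<le> c \<and> (\<Union>i<N. Vp i) = verts G \<and>
      (\<forall>i<N. \<forall>j<N. i \<noteq> j \<longrightarrow> Vp i \<inter> Vp j = {}) \<and>
      (\<forall>idx. (\<forall>k<p. idx k < N) \<longrightarrow> induced G (\<Union>k<p. Vp (idx k)) \<in> D)"
    using bspec[OF decC G] by (elim exE) (erule that)
  note N = conjunct1[OF A]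
  note cov = conjunct1[OF conjunct2[OF A]]
  note disj = conjunct1[OF conjunct2[OF conjunct2[OF A]]]
  note pu = conjunct2[OF conjunct2[OF conjunct2[OF A]]]
  let ?M = "Mf (card (verts G))"
  have dec: "\<forall>idx. (\<forall>k<p. idx k < N) \<longrightarrow> (\<exists>N' U. N' \<le> ?M \<and>
        (\<Union>i<N'. U i) = verts (induced G (\<Union>k<p. Vp (idx k))) \<and>
        (\<forall>i<N'. \<forall>j<N'. i \<noteq> j \<longrightarrow> U i \<inter> U j = {}) \<and>
        (\<forall>idx'. (\<forall>k<p. idx' k < N') \<longrightarrow>
            induced (induced G (\<Union>k<p. Vp (idx k))) (\<Union>k<p. U (idx' k)) \<in> D'))"
  proof (intro allI impI)
    fix idx assume "\<forall>k<p. idx k < N"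
    hence H: "induced G (\<Union>k<p. Vp (idx k)) \<in> D" using pu by blast
    obtain N' U where B: "N' \<le> f (card (verts (induced G (\<Union>k<p. Vp (idx k))))) \<and>
        (\<Union>i<N'. U i) = verts (induced G (\<Union>k<p. Vp (idx k))) \<and>
        (\<forall>i<N'. \<forall>j<N'. i \<noteq> j \<longrightarrow> U i \<inter> U j = {}) \<and>
        (\<forall>idx'. (\<forall>k<p. idx' k < N') \<longrightarrow>
            induced (induced G (\<Union>k<p. Vp (idx k))) (\<Union>k<p. U (idx' k)) \<in> D')"
      using bspec[OF decD H] by (elim exE) (erule that)
    have "N' \<le> ?M" using conjunct1[OF B] bound[OF G] le_trans by blast
    thus "\<exists>N' U. N' \<le> ?M \<and>
        (\<Union>i<N'. U i) = verts (induced G (\<Union>k<p. Vp (idx k))) \<and>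
        (\<forall>i<N'. \<forall>j<N'. i \<noteq> j \<longrightarrow> U i \<inter> U j = {}) \<and>
        (\<forall>idx'. (\<forall>k<p. idx' k < N') \<longrightarrow>
            induced (induced G (\<Union>k<p. Vp (idx k))) (\<Union>k<p. U (idx' k)) \<in> D')"
      using conjunct2[OF B] by (intro exI[of _ N'] exI[of _ U] conjI) (elim conjE; assumption)+
  qed
  obtain N' Vp' where R: "N' \<le> N * (?M+1)^(N^p) \<and> (\<Union>i<N'. Vp' i) = verts G \<and>
      (\<forall>i<N'. \<forall>j<N'. i \<noteq> j \<longrightarrow> Vp' i \<inter> Vp' j = {}) \<and>
      (\<forall>idx. (\<forall>k<p. idx k < N') \<longrightarrow> induced G (\<Union>k<p. Vp' (idx k)) \<in> D')"
    using refine[OF cov disj hered dec] by (elim exE) (erule that)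
  have "N' \<le> c * (?M+1)^(c^p)"
    using conjunct1[OF R] bound_mono[OF N order_refl, of ?M p] le_trans by blast
  thus "\<exists>N Vp. N \<le> c * (?M + 1)^(c^p) \<and> (\<Union>i<N. Vp i) = verts G \<and>
      (\<forall>i<N. \<forall>j<N. i \<noteq> j \<longrightarrow> Vp i \<inter> Vp j = {}) \<and>
      (\<forall>idx. (\<forall>k<p. idx k < N) \<longrightarrow> induced G (\<Union>k<p. Vp (idx k)) \<in> D')"
    using conjunct2[OF R] by (intro exI[of _ N'] exI[of _ Vp'] conjI) (elim conjE; assumption)+
qed


lemma ev_big:
  fixes e A :: real assumes e: "e > 0"
  shows "eventually (\<lambda>n. A \<le> real n powr e) sequentially"
proof -
  define B where "B = max A 1"
  have B1: "B \<ge> 1" unfolding B_def by simp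
  define n0 where "n0 = nat \<lceil>B powr (1/e)\<rceil>"
  have "A \<le> real n powr e" if n: "n \<ge> n0" for n
  proof -
    have "B powr (1/e) \<le> real n0" unfolding n0_def by linarith
    also have "\<dots> \<le> real n" using n by simp
    finally have le: "B powr (1/e) \<le> real n" .
    have "B = (B powr (1/e)) powr e" using B1 e by (simp add: powr_powr)
    also have "\<dots> \<le> real n powr e" using le e by (intro powr_mono2) auto
    finally show ?thesis unfolding B_def by simp
  qed
  thus ?thesis unfolding eventually_sequentially by blast
qed

lemma subpoly_comb:
  assumes sp: "subpoly f"
  shows "subpoly (\<lambda>n. c * (f n + 1)^K)"
  unfolding subpoly_def
proof (intro allI impI)
  fix \<epsilon> :: real assume e: "\<epsilon> > 0"
  define \<delta> where "\<delta> = \<epsilon> / (2 * (real K + 1))"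
  have d: "\<delta> > 0" unfolding \<delta>_def using e by simp
  have dK: "real K * \<delta> \<le> \<epsilon> / 2"
  proof -
    have "real K * \<delta> = \<epsilon> / 2 * (real K / (real K + 1))" unfolding \<delta>_def by (simp add: field_simps)
    also have "\<dots> \<le> \<epsilon> / 2 * 1" using e by (intro mult_left_mono) auto
    finally show ?thesis by simp
  qed
  have ev1: "eventually (\<lambda>n. real (f n) \<le> real n powr \<delta>) sequentially"
    using sp d unfolding subpoly_def by blast
  have ev2: "eventually (\<lambda>n. 1 \<le> n) sequentially" by (rule eventually_ge_at_top)
  have ev3: "eventually (\<lambda>n. real c * 2^K \<le> real n powr (\<epsilon>/2)) sequentially"
    using e by (intro ev_big) simp
  show "eventually (\<lambda>n. real (c * (f n + 1)^K) \<le> real n powr \<epsilon>) sequentially"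
    using ev1 ev2 ev3
  proof eventually_elim
    case (elim n)
    have n1: "real n \<ge> 1" using elim(2) by simp
    have p1: "1 \<le> real n powr \<delta>" using n1 d by (simp add: ge_one_powr_ge_zero)
    have "real (f n) + 1 \<le> 2 * real n powr \<delta>" using elim(1) p1 by linarith
    hence "(real (f n) + 1)^K \<le> (2 * real n powr \<delta>)^K" by (intro power_mono) auto
    also have "\<dots> = 2^K * real n powr (real K * \<delta>)"
      using n1 by (simp add: power_mult_distrib powr_power)
    also have "\<dots> \<le> 2^K * real n powr (\<epsilon>/2)"
      using n1 dK by (intro mult_left_mono powr_mono) auto
    finally have A: "(real (f n) + 1)^K \<le> 2^K * real n powr (\<epsilon>/2)" .
    have "real (c * (f n + 1)^K) = real c * (real (f n) + 1)^K" by (simp add: add.commute)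
    also have "\<dots> \<le> real c * (2^K * real n powr (\<epsilon>/2))" using A by (intro mult_left_mono) auto
    also have "\<dots> = (real c * 2^K) * real n powr (\<epsilon>/2)" by simp
    also have "\<dots> \<le> real n powr (\<epsilon>/2) * real n powr (\<epsilon>/2)" using elim(3) by (intro mult_right_mono) auto
    also have "\<dots> = real n powr \<epsilon>" by (simp flip: powr_add)
    finally show ?case .
  qed
qed

lemma mono_comb:
  fixes f :: "nat \<Rightarrow> nat"
  assumes "mono f" shows "mono (\<lambda>n. c * (f n + 1)^(K::nat))"
proof (rule monoI)
  fix x y :: nat assume "x \<le> y"
  hence "f x + 1 \<le> f y + 1" using monoD[OF assms] by simp
  hence "(f x + 1)^K \<le> (f y + 1)^K" by (rule power_mono) simp
  thus "c * (f x + 1)^K \<le> c * (f y + 1)^K" by (rule mult_le_mono2)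
qed

lemma plus_get: "C \<in> plus_prop Q \<Longrightarrow> p \<ge> 1 \<Longrightarrow> \<exists>c. has_decomp Q C (\<lambda>_. c) p"
  by (simp add: plus_prop_def)

lemma star_get: "C \<in> star_prop Q \<Longrightarrow> p \<ge> 1 \<Longrightarrow> \<exists>f. mono f \<and> subpoly f \<and> has_decomp Q C f p"
  by (simp add: star_prop_def)

lemma plus_hered: "C \<in> plus_prop Q \<Longrightarrow> hereditary C"
  by (simp add: plus_prop_def)

lemma star_hered: "C \<in> star_prop Q \<Longrightarrow> hereditary C"
  by (simp add: star_prop_def)

lemma plus_sub:
  assumes hp: "hereditary_class_property P" and C: "C \<in> plus_prop (plus_prop P)"
  shows "C \<in> plus_prop P"
proof -
  have hC: "hereditary C" using plus_hered[OF C] .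
  have "\<exists>c. has_decomp P C (\<lambda>_. c) p" if p: "p \<ge> 1" for p
  proof -
    obtain c where "has_decomp (plus_prop P) C (\<lambda>_. c) p" using plus_get[OF C p] ..
    then obtain D where D: "D \<in> plus_prop P" and decC: "\<forall>G\<in>C. \<exists>N Vp. N \<le> c \<and> (\<Union>i<N. Vp i) = verts G \<and>
      (\<forall>i<N. \<forall>j<N. i \<noteq> j \<longrightarrow> Vp i \<inter> Vp j = {}) \<and>
      (\<forall>idx. (\<forall>k<p. idx k < N) \<longrightarrow> induced G (\<Union>k<p. Vp (idx k)) \<in> D)"
      unfolding has_decomp_def by (elim bexE) (erule that)
    obtain c' where "has_decomp P D (\<lambda>_. c') p" using plus_get[OF D p] ..
    then obtain D' where D': "D' \<in> P" and decD: "\<forall>H\<in>D. \<exists>N Vp. N \<le> c' \<and> (\<Union>i<N. Vp i) = verts H \<and>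
      (\<forall>i<N. \<forall>j<N. i \<noteq> j \<longrightarrow> Vp i \<inter> Vp j = {}) \<and>
      (\<forall>idx. (\<forall>k<p. idx k < N) \<longrightarrow> induced H (\<Union>k<p. Vp (idx k)) \<in> D')"
      unfolding has_decomp_def by (elim bexE) (erule that)
    have hD': "hereditary D'" using hp D' unfolding hereditary_class_property_def by blast
    have R: "\<forall>G\<in>C. \<exists>N Vp. N \<le> c * ((\<lambda>_. c') (card (verts G)) + 1)^(c^p) \<and> (\<Union>i<N. Vp i) = verts G \<and>
      (\<forall>i<N. \<forall>j<N. i \<noteq> j \<longrightarrow> Vp i \<inter> Vp j = {}) \<and>
      (\<forall>idx. (\<forall>k<p. idx k < N) \<longrightarrow> induced G (\<Union>k<p. Vp (idx k)) \<in> D')"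
      by (rule compose[OF hD' decC, of "\<lambda>_. c'"]) (use decD in simp_all)
    have "has_decomp P C (\<lambda>_. c * (c' + 1)^(c^p)) p"
      unfolding has_decomp_def using R D' by blast
    thus ?thesis ..
  qed
  thus ?thesis using hC unfolding plus_prop_def by blast
qed

lemma star_sub:
  assumes hp: "hereditary_class_property P" and C: "C \<in> plus_prop (star_prop P)"
  shows "C \<in> star_prop P"
proof -
  have hC: "hereditary C" using plus_hered[OF C] .
  have "\<exists>g. mono g \<and> subpoly g \<and> has_decomp P C g p" if p: "p \<ge> 1" for p
  proof -
    obtain c where "has_decomp (star_prop P) C (\<lambda>_. c) p" using plus_get[OF C p] ..
    then obtain D where D: "D \<in> star_prop P" and decC: "\<forall>G\<in>C. \<exists>N Vp. N \<le> c \<and> (\<Union>i<N. Vp i) = verts G \<and>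
      (\<forall>i<N. \<forall>j<N. i \<noteq> j \<longrightarrow> Vp i \<inter> Vp j = {}) \<and>
      (\<forall>idx. (\<forall>k<p. idx k < N) \<longrightarrow> induced G (\<Union>k<p. Vp (idx k)) \<in> D)"
      unfolding has_decomp_def by (elim bexE) (erule that)
    obtain f where f: "mono f" "subpoly f" and "has_decomp P D f p"
      using star_get[OF D p] by blast
    then obtain D' where D': "D' \<in> P" and decD: "\<forall>H\<in>D. \<exists>N Vp. N \<le> f (card (verts H)) \<and> (\<Union>i<N. Vp i) = verts H \<and>
      (\<forall>i<N. \<forall>j<N. i \<noteq> j \<longrightarrow> Vp i \<inter> Vp j = {}) \<and>
      (\<forall>idx. (\<forall>k<p. idx k < N) \<longrightarrow> induced H (\<Union>k<p. Vp (idx k)) \<in> D')"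
      unfolding has_decomp_def by (elim bexE) (erule that)
    have hD': "hereditary D'" using hp D' unfolding hereditary_class_property_def by blast
    have bound: "f (card (verts (induced G X))) \<le> f (card (verts G))" if G: "G \<in> C" for G X
    proof -
      have "finite (verts G)" using hered_wf[OF hC G] unfolding wf_graph_def by blast
      hence "card (verts (induced G X)) \<le> card (verts G)"
        by (intro card_mono) (auto simp: verts_induced)
      thus ?thesis using f(1) by (rule monoD[rotated])
    qed
    have R: "\<forall>G\<in>C. \<exists>N Vp. N \<le> c * (f (card (verts G)) + 1)^(c^p) \<and> (\<Union>i<N. Vp i) = verts G \<and>
      (\<forall>i<N. \<forall>j<N. i \<noteq> j \<longrightarrow> Vp i \<inter> Vp j = {}) \<and>
      (\<forall>idx. (\<forall>k<p. idx k < N) \<longrightarrow> induced G (\<Union>k<p. Vp (idx k)) \<in> D')"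
      by (rule compose[OF hD' decC decD bound])
    have "has_decomp P C (\<lambda>n. c * (f n + 1)^(c^p)) p"
      unfolding has_decomp_def using R D' by blast
    moreover have "mono (\<lambda>n. c * (f n + 1)^(c^p))" using mono_comb[OF f(1)] .
    moreover have "subpoly (\<lambda>n. c * (f n + 1)^(c^p))" using subpoly_comb[OF f(2)] .
    ultimately show ?thesis by blast
  qed
  thus ?thesis using hC unfolding star_prop_def by blast
qed

theorem mainTheorem8:
  assumes "hereditary_class_property P"
  shows "plus_prop (plus_prop P) = plus_prop P \<and> plus_prop (star_prop P) = star_prop P"
proof
  show "plus_prop (plus_prop P) = plus_prop P"
  proof
    show "plus_prop (plus_prop P) \<subseteq> plus_prop P" using plus_sub[OF assms] by blast
    show "plus_prop P \<subseteq> plus_prop (plus_prop P)"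
    proof
      fix C assume C: "C \<in> plus_prop P"
      have hC: "hereditary C" using plus_hered[OF C] .
      have "\<exists>c. has_decomp (plus_prop P) C (\<lambda>_. c) p" if "p \<ge> 1" for p
        using self_decomp[OF hC C that] by blast
      thus "C \<in> plus_prop (plus_prop P)" using hC unfolding plus_prop_def by blast
    qed
  qed
  show "plus_prop (star_prop P) = star_prop P"
  proof
    show "plus_prop (star_prop P) \<subseteq> star_prop P" using star_sub[OF assms] by blast
    show "star_prop P \<subseteq> plus_prop (star_prop P)"
    proof
      fix C assume C: "C \<in> star_prop P"
      have hC: "hereditary C" using star_hered[OF C] .
      have "\<exists>c. has_decomp (star_prop P) C (\<lambda>_. c) p" if "p \<ge> 1" for p
        using self_decomp[OF hC C that] by blast
      thus "C \<in> plus_prop (star_prop P)" using hC unfolding plus_prop_def by blast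
    qed
  qed
qed

end
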